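(* Let $(G,\mathcal{C})$ be a 2-colored graph, $G=(V,E)$, and $l,u:E\to\mathbb{N}$ with $l\le u$. Suppose $f\in\mathcal{A}(G,\mathcal{C})\cap\mathbb{N}^E$ is infeasible, but $\mathcal{A}(G,\mathcal{C})\cap\mathbb{N}^E$ contains a feasible vector. Then for each $e\in E$: (i) if $f(e)<l(e)$, then $G(f)$ has a CAT through $e_1$; (ii) if $f(e)>u(e)$, then $G(f)$ has a CAT through $e_3$.
   Context: Graphs are finite, undirected, may have parallel edges but no loops; $\mathcal{C}:E\to\{R,B\}$ is a red/blue coloring. The alternating cone $\mathcal{A}(G,\mathcal{C})\subseteq\mathbb{R}^E$ consists of $x\ge0$ with, at every vertex, the sum of $x$ over incident red edges equal to the sum over incident blue edges. A vector $f\in\mathcal{A}(G,\mathcal{C})$ is feasible if $l(e)\le f(e)\le u(e)$ for all $e$, infeasible otherwise. The residual 2-colored graph $G(f)=(V,E(f))$ of $f\in\mathcal{A}(G,\mathcal{C})\cap\mathbb{N}^E$ w.r.t. $l,u$: take four disjoint copies $e_1,e_2,e_3,e_4$ of each $e\in E$ (each with the same endpoints as $e$); $e_1\in E(f)$ with color $\mathcal{C}(e)$ iff $f(e)\le u(e)-1$; $e_2\in E(f)$ with color $\mathcal{C}(e)$ iff $f(e)\le u(e)-2$; $e_3\in E(f)$ with the color opposite to $\mathcal{C}(e)$ iff $f(e)\ge l(e)+1$; $e_4\in E(f)$ with the color opposite to $\mathcal{C}(e)$ iff $f(e)\ge l(e)+2$. A CAT (closed alternating trail) is a walk $(v_0,a_1,v_1,\dots,a_m,v_m)$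 with $v_0=v_m$, distinct edges $a_1,\dots,a_m$, consecutive edges of different colors, and $a_m$, $a_1$ of different colors; it is through an edge if that edge is among the $a_j$. *)

theory Defs
  imports Complex_Main
begin

datatype color = Red | Blue

fun opp :: "color \<Rightarrow> color" where
  "opp Red = Blue" | "opp Blue = Red"

definition multigraph :: "'v set \<Rightarrow> 'e set \<Rightarrow> ('e \<Rightarrow> 'v set) \<Rightarrow> bool" where
  "multigraph V E ends \<longleftrightarrow> finite V \<and> finite E \<and>
     (\<forall>e\<in>E. ends e \<subseteq> V \<and> card (ends e) = 2)"

text \<open>Alternating cone A(G,C) as a subset of R^E (functions on E; values off E irrelevant).\<close>
definition alt_cone :: "'v set \<Rightarrow> 'e set \<Rightarrow> ('e \<Rightarrow> 'v set) \<Rightarrow> ('e \<Rightarrow> color) \<Rightarrow> ('e \<Rightarrow> real) set" where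
  "alt_cone V E ends C = {x. (\<forall>e\<in>E. 0 \<le> x e) \<and>
     (\<forall>v\<in>V. (\<Sum>e\<in>{e\<in>E. v \<in> ends e \<and> C e = Red}. x e) =
             (\<Sum>e\<in>{e\<in>E. v \<in> ends e \<and> C e = Blue}. x e))}"

definition in_alt_cone_nat :: "'v set \<Rightarrow> 'e set \<Rightarrow> ('e \<Rightarrow> 'v set) \<Rightarrow> ('e \<Rightarrow> color) \<Rightarrow> ('e \<Rightarrow> nat) \<Rightarrow> bool" where
  "in_alt_cone_nat V E ends C f \<longleftrightarrow> (\<lambda>e. real (f e)) \<in> alt_cone V E ends C"

definition feasible :: "'e set \<Rightarrow> ('e \<Rightarrow> nat) \<Rightarrow> ('e \<Rightarrow> nat) \<Rightarrow> ('e \<Rightarrow> nat) \<Rightarrow> bool" where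
  "feasible E l u f \<longleftrightarrow> (\<forall>e\<in>E. l e \<le> f e \<and> f e \<le> u e)"

text \<open>Residual 2-colored graph G(f): edge (e,i) is the copy e_i, i \<in> {1,2,3,4}.
  Its endpoints are those of e.\<close>
definition res_edges :: "'e set \<Rightarrow> ('e \<Rightarrow> nat) \<Rightarrow> ('e \<Rightarrow> nat) \<Rightarrow> ('e \<Rightarrow> nat) \<Rightarrow> ('e \<times> nat) set" where
  "res_edges E l u f =
     {(e,1) | e. e \<in> E \<and> f e + 1 \<le> u e} \<union>
     {(e,2) | e. e \<in> E \<and> f e + 2 \<le> u e} \<union>
     {(e,3) | e. e \<in> E \<and> l e + 1 \<le> f e} \<union>
     {(e,4) | e. e \<in> E \<and> l e + 2 \<le> f e}"

definition res_ends :: "('e \<Rightarrow> 'v set) \<Rightarrow> ('e \<times> nat) \<Rightarrow> 'v set" where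
  "res_ends ends a = ends (fst a)"

definition res_color :: "('e \<Rightarrow> color) \<Rightarrow> ('e \<times> nat) \<Rightarrow> color" where
  "res_color C a = (if snd a \<in> {1,2} then C (fst a) else opp (C (fst a)))"

text \<open>Closed alternating trail (v_0,a_1,v_1,...,a_m,v_m): vs = [v_0..v_m], es = [a_1..a_m].\<close>
definition is_CAT :: "'x set \<Rightarrow> ('x \<Rightarrow> 'v set) \<Rightarrow> ('x \<Rightarrow> color) \<Rightarrow> 'v list \<Rightarrow> 'x list \<Rightarrow> bool" where
  "is_CAT E ends C vs es \<longleftrightarrow>
     es \<noteq> [] \<and> length vs = length es + 1 \<and> hd vs = last vs \<and>
     distinct es \<and> set es \<subseteq> E \<and>
     (\<forall>j<length es. ends (es ! j) = {vs ! j, vs ! (j+1)}) \<and>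
     (\<forall>j. j + 1 < length es \<longrightarrow> C (es ! j) \<noteq> C (es ! (j+1))) \<and>
     C (last es) \<noteq> C (hd es)"

definition has_CAT_through :: "'x set \<Rightarrow> ('x \<Rightarrow> 'v set) \<Rightarrow> ('x \<Rightarrow> color) \<Rightarrow> 'x \<Rightarrow> bool" where
  "has_CAT_through E ends C a \<longleftrightarrow> (\<exists>vs es. is_CAT E ends C vs es \<and> a \<in> set es)"

end

theory Submission
  imports Defs
begin

definition trail :: "'x set \<Rightarrow> ('x \<Rightarrow> 'v set) \<Rightarrow> ('x \<Rightarrow> color) \<Rightarrow> 'v list \<Rightarrow> 'x list \<Rightarrow> bool" where
"trail X en col vs es \<longleftrightarrow> length vs = length es + 1 \<and> distinct es \<and> set es \<subseteq> X \<and>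
   (\<forall>j<length es. en (es!j) = {vs!j, vs!(j+1)}) \<and>
   (\<forall>j. j+1 < length es \<longrightarrow> col (es!j) \<noteq> col (es!(j+1)))"

lemma CAT_iff: "is_CAT X en col vs es \<longleftrightarrow> es \<noteq> [] \<and> trail X en col vs es \<and> hd vs = last vs \<and> col (last es) \<noteq> col (hd es)"
  by (auto simp: is_CAT_def trail_def)

fun sg :: "color \<Rightarrow> real" where "sg Red = 1" | "sg Blue = -1"

lemma sg_opp: "sg (opp c) = - sg c" by (cases c) auto
lemma opp_neq: "c \<noteq> c' \<Longrightarrow> c' = opp c" by (cases c; cases c') auto
lemma sg_nz: "sg c \<noteq> 0" by (cases c) auto

lemma trail_snoc: "trail X en col (vs@[z]) (es@[x]) \<Longrightarrow> trail X en col vs es"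
  unfolding trail_def
proof (intro conjI allI impI; (elim conjE)?)
  assume L: "length (vs @ [z]) = length (es @ [x]) + 1"
    and E: "\<forall>j<length (es @ [x]). en ((es @ [x]) ! j) = {(vs @ [z]) ! j, (vs @ [z]) ! (j + 1)}"
    and C: "\<forall>j. j + 1 < length (es @ [x]) \<longrightarrow> col ((es @ [x]) ! j) \<noteq> col ((es @ [x]) ! (j + 1))"
  show "length vs = length es + 1" using L by simp
  fix j
  { assume "j < length es"
    then show "en (es ! j) = {vs ! j, vs ! (j + 1)}" using E[rule_format, of j] L
      by (simp add: nth_append) }
  { assume "j + 1 < length es"
    then show "col (es ! j) \<noteq> col (es ! (j + 1))" using C[rule_format, of j]
      by (simp add: nth_append) }
qed auto

lemma trail_extend:
  assumes "trail X en col vs es" "es \<noteq> []" "x \<in> X" "x \<notin> set es" "en x = {last vs, z}"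
    "col x \<noteq> col (last es)"
  shows "trail X en col (vs@[z]) (es@[x])"
proof -
  have L: "length vs = length es + 1" using assms(1) by (simp add: trail_def)
  have "vs \<noteq> []" using L by auto
  then have lv: "last vs = vs ! length es" using L by (simp add: last_conv_nth)
  have le: "last es = es ! (length es - 1)" using assms(2) by (simp add: last_conv_nth)
  show ?thesis
    unfolding trail_def
  proof (intro conjI allI impI)
    fix j assume j: "j < length (es @ [x])"
    show "en ((es @ [x]) ! j) = {(vs @ [z]) ! j, (vs @ [z]) ! (j + 1)}"
    proof (cases "j < length es")
      case True then show ?thesis using assms(1) L by (simp add: nth_append trail_def)
    next
      case False then have "j = length es" using j by simp
      then show ?thesis using assms(5) L lv by (simp add: nth_append)
    qed
  next
    fix j assume j: "j + 1 < length (es @ [x])"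
    show "col ((es @ [x]) ! j) \<noteq> col ((es @ [x]) ! (j + 1))"
    proof (cases "j + 1 < length es")
      case True then show ?thesis using assms(1) by (simp add: nth_append trail_def)
    next
      case False then have "j + 1 = length es" using j by simp
      then have "j = length es - 1" by simp
      then show ?thesis using assms(6) le \<open>j + 1 = length es\<close> by (auto simp add: nth_append)
    qed
  qed (use assms L in \<open>auto simp: trail_def\<close>)
qed

lemma trail_balance:
  assumes c2: "\<forall>x\<in>X. card (en x) = 2"
  shows "trail X en col vs es \<Longrightarrow> es \<noteq> [] \<Longrightarrow>
    (\<Sum>x\<in>{x\<in>set es. w \<in> en x}. sg (col x)) =
      (if w = hd vs then sg (col (hd es)) else 0) + (if w = last vs then sg (col (last es)) else 0)"
proof (induction es arbitrary: vs rule: rev_induct)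
  case Nil then show ?case by simp
next
  case (snoc x es)
  have L: "length vs = length es + 2" using snoc.prems by (simp add: trail_def)
  then obtain vs' z where vs: "vs = vs' @ [z]" by (cases vs rule: rev_exhaust) auto
  have L': "length vs' = length es + 1" using L vs by simp
  have tr': "trail X en col vs' es" using trail_snoc[of X en col vs' z es x] snoc.prems(1) vs by simp
  have xX: "x \<in> X" using snoc.prems(1) by (simp add: trail_def)
  have T: "\<forall>j<length (es@[x]). en ((es@[x]) ! j) = {vs ! j, vs ! (j + 1)}"
    using snoc.prems(1) unfolding trail_def by blast
  have "en ((es@[x]) ! length es) = {vs ! length es, vs ! (length es + 1)}"
    using T[rule_format, of "length es"] by simp
  then have enx: "en x = {vs' ! length es, z}"
    using vs L' by (simp add: nth_append)
  have "card (en x) = 2" using c2 xX by blast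
  then have neq: "vs' ! length es \<noteq> z" using enx by auto
  have xn: "x \<notin> set es" using snoc.prems(1) by (simp add: trail_def)
  have vs'ne: "vs' \<noteq> []" using L' by auto
  have lv': "last vs' = vs' ! length es" using L' vs'ne by (simp add: last_conv_nth)
  show ?case
  proof (cases "es = []")
    case True
    then have "vs' = [vs' ! 0]" using L' by (cases vs') auto
    then have vsa: "vs = [vs' ! 0, z]" using vs by simp
    have ex: "en x = {vs' ! 0, z}" using enx True by simp
    have n0: "vs' ! 0 \<noteq> z" using neq True by simp
    have S: "{y\<in>set (es@[x]). w \<in> en y} = (if w = vs' ! 0 \<or> w = z then {x} else {})"
      using True ex by auto
    show ?thesis unfolding S using True vsa n0 by (simp only:) auto
  next
    case False
    have IH: "(\<Sum>x\<in>{x\<in>set es. w \<in> en x}. sg (col x)) =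
      (if w = hd vs' then sg (col (hd es)) else 0) + (if w = last vs' then sg (col (last es)) else 0)"
      using snoc.IH[OF tr' False] .
    have T2: "\<forall>j. j+1 < length (es@[x]) \<longrightarrow> col ((es@[x]) ! j) \<noteq> col ((es@[x]) ! (j+1))"
      using snoc.prems(1) unfolding trail_def by blast
    have "col ((es@[x]) ! (length es - 1)) \<noteq> col ((es@[x]) ! (length es - 1 + 1))"
      using T2[rule_format, of "length es - 1"] False by simp
    then have cx: "col x \<noteq> col (last es)"
      using False by (simp add: nth_append last_conv_nth)
    have sx: "sg (col x) = - sg (col (last es))" using opp_neq[OF cx[symmetric]] sg_opp by simp
    have set: "{y\<in>set (es@[x]). w \<in> en y} = (if w \<in> en x then insert x {y\<in>set es. w \<in> en y} else {y\<in>set es. w \<in> en y})"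
      by auto
    have "(\<Sum>y\<in>{y\<in>set (es@[x]). w \<in> en y}. sg (col y)) =
        (if w \<in> en x then sg (col x) else 0) + (\<Sum>x\<in>{x\<in>set es. w \<in> en x}. sg (col x))"
      unfolding set using xn by (simp add: sum.insert)
    also have "\<dots> = (if w = hd vs then sg (col (hd (es@[x]))) else 0) + (if w = last vs then sg (col (last (es@[x]))) else 0)"
    proof -
      have h1: "hd vs = hd vs'" "last vs = z" "hd (es@[x]) = hd es" "last (es@[x]) = x"
        using vs vs'ne False by auto
      show ?thesis unfolding IH h1 lv' enx
        using neq sx by (cases "w = vs' ! length es"; cases "w = z") simp_all
    qed
    finally show ?thesis .
  qed
qed

lemma card2_other: "card S = 2 \<Longrightarrow> w \<in> S \<Longrightarrow> \<exists>z. S = {w, z} \<and> z \<noteq> w"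
  by (auto simp: card_2_iff)

lemma CAT_from_trail:
  assumes fin: "finite X" and c2: "\<forall>x\<in>X. card (en x) = 2"
    and bal: "\<forall>w. (\<Sum>x\<in>{x\<in>X. w \<in> en x}. sg (col x)) = 0"
  shows "trail X en col vs es \<Longrightarrow> es \<noteq> [] \<Longrightarrow> \<exists>vs' es'. is_CAT X en col vs' es' \<and> hd es \<in> set es'"
proof (induction "card X - length es" arbitrary: vs es rule: less_induct)
  case less
  show ?case
  proof (cases "hd vs = last vs \<and> col (last es) \<noteq> col (hd es)")
    case True
    then have "is_CAT X en col vs es" using less.prems by (simp add: CAT_iff)
    moreover have "hd es \<in> set es" using less.prems(2) by simp
    ultimately show ?thesis by blast
  next
    case False
    define w where "w = last vs"
    define c0 where "c0 = col (last es)"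
    have used: "(\<Sum>x\<in>{x\<in>set es. w \<in> en x}. sg (col x)) =
      (if w = hd vs then sg (col (hd es)) else 0) + sg c0"
      using trail_balance[OF c2 less.prems] unfolding w_def c0_def by simp
    have sub: "set es \<subseteq> X" using less.prems(1) by (simp add: trail_def)
    have dis: "distinct es" using less.prems(1) by (simp add: trail_def)
    let ?U = "{x\<in>X - set es. w \<in> en x}"
    have split: "{x\<in>X. w \<in> en x} = {x\<in>set es. w \<in> en x} \<union> ?U" using sub by auto
    have tot: "(\<Sum>x\<in>{x\<in>set es. w \<in> en x}. sg (col x)) + (\<Sum>x\<in>?U. sg (col x)) = 0"
      using bal[rule_format, of w] unfolding split
      by (subst (asm) sum.union_disjoint) (use fin finite_subset[OF sub fin] in auto)
    have "\<exists>x\<in>?U. col x \<noteq> c0"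
    proof (rule ccontr)
      assume "\<not> ?thesis"
      then have "(\<Sum>x\<in>?U. sg (col x)) = (\<Sum>x\<in>?U. sg c0)" by (intro sum.cong) auto
      then have "(\<Sum>x\<in>?U. sg (col x)) = real (card ?U) * sg c0" by simp
      with tot used have eq: "(if w = hd vs then sg (col (hd es)) else 0) + sg c0 + real (card ?U) * sg c0 = 0"
        by simp
      have "(if w = hd vs then sg (col (hd es)) else 0) = 0 \<or> (if w = hd vs then sg (col (hd es)) else 0) = sg c0"
        using False unfolding w_def c0_def by auto
      then have "(real (card ?U) + 1) * sg c0 = 0 \<or> (real (card ?U) + 2) * sg c0 = 0"
        using eq by (auto simp: algebra_simps)
      then show False using sg_nz[of c0] by auto
    qed
    then obtain x where x: "x \<in> X" "x \<notin> set es" "w \<in> en x" "col x \<noteq> c0" by auto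
    obtain z where z: "en x = {w, z}" using card2_other[OF c2[rule_format, OF x(1)] x(3)] by auto
    have tr: "trail X en col (vs@[z]) (es@[x])"
      using trail_extend[OF less.prems(1) less.prems(2) x(1) x(2)] z x(4) unfolding w_def c0_def by simp
    have "length (es@[x]) \<le> card X"
    proof -
      have "set (es@[x]) \<subseteq> X" using sub x by auto
      then have "card (set (es@[x])) \<le> card X" using fin by (simp add: card_mono)
      moreover have "distinct (es@[x])" using dis x by simp
      ultimately show ?thesis using distinct_card by fastforce
    qed
    then have "card X - length (es@[x]) < card X - length es" by simp
    from less.hyps[OF this tr] show ?thesis using less.prems(2) by simp
  qed
qed

lemma CAT_exists:
  assumes fin: "finite X" and c2: "\<forall>x\<in>X. card (en x) = 2"
    and bal: "\<forall>w. (\<Sum>x\<in>{x\<in>X. w \<in> en x}. sg (col x)) = 0"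
    and a: "a \<in> X"
  shows "\<exists>vs es. is_CAT X en col vs es \<and> a \<in> set es"
proof -
  obtain p q where pq: "en a = {p, q}" using c2 a by (auto simp: card_2_iff)
  have "trail X en col [p, q] [a]" using pq a by (auto simp: trail_def)
  from CAT_from_trail[OF fin c2 bal this] show ?thesis by simp
qed

lemma CAT_reindex:
  assumes cat: "is_CAT X en col vs es" and L: "0 < L"
    and s1: "\<forall>k\<le>L. \<sigma> k \<le> length es" and s2: "\<forall>k<L. \<sigma> k < length es"
    and inj: "inj_on \<sigma> {..<L}"
    and sv: "\<forall>k<L. vs ! \<sigma> (k+1) = vs ! (\<sigma> k + 1)" and cl: "vs ! \<sigma> 0 = vs ! \<sigma> L"
    and alt: "\<forall>k. k+1 < L \<longrightarrow> col (es ! \<sigma> k) \<noteq> col (es ! \<sigma> (k+1))"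
    and cyc: "col (es ! \<sigma> (L-1)) \<noteq> col (es ! \<sigma> 0)"
  shows "is_CAT X en col (map (\<lambda>k. vs ! \<sigma> k) [0..<L+1]) (map (\<lambda>k. es ! \<sigma> k) [0..<L])"
proof -
  have Lv: "length vs = length es + 1" and D: "distinct es" and S: "set es \<subseteq> X"
    and EN: "\<forall>j<length es. en (es ! j) = {vs ! j, vs ! (j + 1)}"
    using cat by (auto simp: is_CAT_def)
  have "distinct (map (\<lambda>k. es ! \<sigma> k) [0..<L])"
    unfolding distinct_map
  proof
    show "inj_on (\<lambda>k. es ! \<sigma> k) (set [0..<L])"
    proof (rule inj_onI)
      fix a b assume "a \<in> set [0..<L]" "b \<in> set [0..<L]" "es ! \<sigma> a = es ! \<sigma> b"
      then have "\<sigma> a = \<sigma> b" using D s2 by (simp add: nth_eq_iff_index_eq)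
      then show "a = b" using inj \<open>a \<in> set [0..<L]\<close> \<open>b \<in> set [0..<L]\<close>
        by (auto dest: inj_onD)
    qed
  qed simp
  moreover have "set (map (\<lambda>k. es ! \<sigma> k) [0..<L]) \<subseteq> X" using S s2 by auto
  moreover have "\<forall>k<L. en (es ! \<sigma> k) = {vs ! \<sigma> k, vs ! \<sigma> (k+1)}"
    using EN s2 sv by auto
  moreover have "hd (map (\<lambda>k. vs ! \<sigma> k) [0..<L+1]) = vs ! \<sigma> 0" by (simp add: hd_conv_nth del: upt_Suc)
  moreover have "last (map (\<lambda>k. vs ! \<sigma> k) [0..<L+1]) = vs ! \<sigma> L" by (simp add: last_conv_nth del: upt_Suc)
  moreover have "hd (map (\<lambda>k. es ! \<sigma> k) [0..<L]) = es ! \<sigma> 0" using L by (simp add: hd_conv_nth del: upt_Suc)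
  moreover have "last (map (\<lambda>k. es ! \<sigma> k) [0..<L]) = es ! \<sigma> (L-1)" using L by (simp add: last_conv_nth del: upt_Suc)
  ultimately show ?thesis using L alt cyc cl unfolding is_CAT_def
    by (simp add: nth_append del: upt_Suc)
qed

lemma CAT_cut:
  assumes cat: "is_CAT X en col vs es" and ij: "i < j" "j < length es"
    and c: "col (es ! i) = col (es ! j)" and v: "vs ! i = vs ! j" and p: "p < length es"
  shows "\<exists>vs' es'. is_CAT X en col vs' es' \<and> length es' < length es \<and> es ! p \<in> set es'"
proof -
  define n where "n = length es"
  have Lv: "length vs = n + 1" using cat by (simp add: is_CAT_def n_def)
  have alt: "\<forall>k. k+1 < n \<longrightarrow> col (es ! k) \<noteq> col (es ! (k+1))"
    using cat by (simp add: is_CAT_def n_def)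
  have ne: "es \<noteq> []" using ij by auto
  have cyc: "col (es ! (n-1)) \<noteq> col (es ! 0)"
    using cat ne by (simp add: is_CAT_def n_def last_conv_nth hd_conv_nth)
  have vne: "vs \<noteq> []" using Lv by auto
  have "hd vs = last vs" using cat by (simp add: is_CAT_def)
  then have hl: "vs ! 0 = vs ! n" using Lv vne by (simp add: hd_conv_nth last_conv_nth)
  show ?thesis
  proof (cases "i \<le> p \<and> p < j")
    case True
    define \<sigma> where "\<sigma> k = i + k" for k
    have "is_CAT X en col (map (\<lambda>k. vs ! \<sigma> k) [0..<(j-i)+1]) (map (\<lambda>k. es ! \<sigma> k) [0..<j-i])"
    proof (rule CAT_reindex[OF cat])
      show "col (es ! \<sigma> (j - i - 1)) \<noteq> col (es ! \<sigma> 0)"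
      proof -
        have "j - 1 + 1 < n" "j - 1 + 1 = j" using ij n_def by auto
        then have "col (es ! (j-1)) \<noteq> col (es ! j)" using alt by metis
        moreover have "i + (j - i - 1) = j - 1" using ij by auto
        ultimately show ?thesis using c by (simp add: \<sigma>_def)
      qed
    qed (use ij v alt in \<open>auto simp: \<sigma>_def inj_on_def n_def\<close>)
    moreover have "es ! p \<in> set (map (\<lambda>k. es ! \<sigma> k) [0..<j-i])"
      using True by (auto simp: \<sigma>_def image_iff intro!: bexI[of _ "p - i"])
    ultimately show ?thesis using ij by (intro exI[of _ "map (\<lambda>k. vs ! \<sigma> k) [0..<(j-i)+1]"] exI[of _ "map (\<lambda>k. es ! \<sigma> k) [0..<j-i]"]) auto
  next
    case False
    define \<sigma> where "\<sigma> k = (if k < i then k else k + (j - i))" for k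
    define L where "L = n - (j - i)"
    have iL: "i < L" using ij by (simp add: L_def n_def)
    have "is_CAT X en col (map (\<lambda>k. vs ! \<sigma> k) [0..<L+1]) (map (\<lambda>k. es ! \<sigma> k) [0..<L])"
    proof (rule CAT_reindex[OF cat])
      show "0 < L" using iL by simp
      show "\<forall>k\<le>L. \<sigma> k \<le> length es" using ij by (auto simp: \<sigma>_def L_def n_def)
      show "\<forall>k<L. \<sigma> k < length es" using ij by (auto simp: \<sigma>_def L_def n_def)
      show "inj_on \<sigma> {..<L}" using ij by (auto simp: \<sigma>_def inj_on_def)
      show "\<forall>k<L. vs ! \<sigma> (k + 1) = vs ! (\<sigma> k + 1)"
      proof (intro allI impI)
        fix k assume "k < L"
        show "vs ! \<sigma> (k + 1) = vs ! (\<sigma> k + 1)"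
        proof (cases "k + 1 < i")
          case True then show ?thesis by (simp add: \<sigma>_def)
        next
          case False
          then have "k + 1 = i \<or> i \<le> k" by auto
          then show ?thesis using v ij by (auto simp: \<sigma>_def)
        qed
      qed
      show "vs ! \<sigma> 0 = vs ! \<sigma> L"
      proof -
        have "\<sigma> L = n" using iL ij by (simp add: \<sigma>_def L_def n_def)
        then show ?thesis using hl v by (cases "i = 0") (auto simp: \<sigma>_def)
      qed
      show "\<forall>k. k + 1 < L \<longrightarrow> col (es ! \<sigma> k) \<noteq> col (es ! \<sigma> (k + 1))"
      proof (intro allI impI)
        fix k assume k: "k + 1 < L"
        show "col (es ! \<sigma> k) \<noteq> col (es ! \<sigma> (k + 1))"
        proof (cases "k + 1 < i")
          case True then show ?thesis using alt ij by (simp add: \<sigma>_def n_def)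
        next
          case False
          then have "k + 1 = i \<or> i \<le> k" by auto
          then show ?thesis
          proof
            assume "k + 1 = i"
            then show ?thesis using alt[rule_format, of k] ij c by (auto simp: \<sigma>_def n_def)
          next
            assume "i \<le> k"
            then show ?thesis using alt[rule_format, of "k + (j - i)"] k ij
              by (auto simp: \<sigma>_def n_def L_def)
          qed
        qed
      qed
      show "col (es ! \<sigma> (L - 1)) \<noteq> col (es ! \<sigma> 0)"
      proof -
        have "\<sigma> (L - 1) = n - 1" using iL ij by (auto simp: \<sigma>_def L_def n_def)
        then show ?thesis using cyc c by (cases "i = 0") (auto simp: \<sigma>_def)
      qed
    qed
    moreover have "es ! p \<in> set (map (\<lambda>k. es ! \<sigma> k) [0..<L])"
    proof (cases "p < i")
      case True then show ?thesis using iL by (auto simp: \<sigma>_def image_iff intro!: bexI[of _ p])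
    next
      case False
      then have "j \<le> p" using \<open>\<not> (i \<le> p \<and> p < j)\<close> by auto
      then show ?thesis using p ij
        by (auto simp: \<sigma>_def image_iff L_def n_def intro!: bexI[of _ "p - (j - i)"])
    qed
    moreover have "L < length es" using ij by (simp add: L_def n_def)
    ultimately show ?thesis by (intro exI[of _ "map (\<lambda>k. vs ! \<sigma> k) [0..<L+1]"] exI[of _ "map (\<lambda>k. es ! \<sigma> k) [0..<L]"]) auto
  qed
qed

lemma CAT_minimal:
  assumes "is_CAT X en col vs es" "x \<in> set es" "P x"
  shows "\<exists>vs es. is_CAT X en col vs es \<and> (\<exists>x\<in>set es. P x) \<and>
     (\<forall>i j. i < j \<longrightarrow> j < length es \<longrightarrow> col (es ! i) = col (es ! j) \<longrightarrow> vs ! i \<noteq> vs ! j)"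
proof -
  let ?Q = "\<lambda>n. \<exists>vs es. is_CAT X en col vs es \<and> (\<exists>x\<in>set es. P x) \<and> length es = n"
  have "?Q (length es)" using assms by blast
  then have Q: "?Q (LEAST n. ?Q n)" by (rule LeastI)
  then obtain vs0 es0 where c0: "is_CAT X en col vs0 es0" "\<exists>x\<in>set es0. P x" "length es0 = (LEAST n. ?Q n)"
    by blast
  have "\<forall>i j. i < j \<longrightarrow> j < length es0 \<longrightarrow> col (es0 ! i) = col (es0 ! j) \<longrightarrow> vs0 ! i \<noteq> vs0 ! j"
  proof (intro allI impI notI)
    fix i j assume h: "i < j" "j < length es0" "col (es0 ! i) = col (es0 ! j)" "vs0 ! i = vs0 ! j"
    obtain y where y: "y \<in> set es0" "P y" using c0 by blast
    then obtain p where p: "p < length es0" "es0 ! p = y" by (auto simp: in_set_conv_nth)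
    from CAT_cut[OF c0(1) h(1) h(2) h(3) h(4) p(1)] obtain vs' es' where
      "is_CAT X en col vs' es'" "length es' < length es0" "es0 ! p \<in> set es'" by blast
    then have "?Q (length es')" using p y by blast
    then have "(LEAST n. ?Q n) \<le> length es'" by (rule Least_le)
    then show False using \<open>length es' < length es0\<close> c0(3) by simp
  qed
  then show ?thesis using c0 by blast
qed

lemma cone_bal:
  assumes mg: "multigraph V E ends" and h: "in_alt_cone_nat V E ends C h"
  shows "(\<Sum>e\<in>{e\<in>E. w \<in> ends e}. real (h e) * sg (C e)) = 0"
proof (cases "w \<in> V")
  case False
  then have EE: "{e\<in>E. w \<in> ends e} = {}" using mg by (auto simp: multigraph_def)
  show ?thesis unfolding EE by simp
next
  case True
  have fin: "finite E" using mg by (simp add: multigraph_def)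
  let ?R = "{e\<in>E. w \<in> ends e \<and> C e = Red}" and ?B = "{e\<in>E. w \<in> ends e \<and> C e = Blue}"
  have eq: "(\<Sum>e\<in>?R. real (h e)) = (\<Sum>e\<in>?B. real (h e))"
    using h True by (simp add: in_alt_cone_nat_def alt_cone_def)
  have U: "{e\<in>E. w \<in> ends e} = ?R \<union> ?B" by (auto intro: color.exhaust)
  have "(\<Sum>e\<in>{e\<in>E. w \<in> ends e}. real (h e) * sg (C e)) =
      (\<Sum>e\<in>?R. real (h e) * sg (C e)) + (\<Sum>e\<in>?B. real (h e) * sg (C e))"
    unfolding U by (rule sum.union_disjoint) (use fin in auto)
  also have "\<dots> = (\<Sum>e\<in>?R. real (h e)) - (\<Sum>e\<in>?B. real (h e))"
    by (simp add: sum_negf)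
  finally show ?thesis using eq by simp
qed

lemma H_bal:
  assumes mg: "multigraph V E ends" and f: "in_alt_cone_nat V E ends C f"
    and g: "in_alt_cone_nat V E ends C g"
    and m: "\<forall>e. m e = nat \<bar>int (g e) - int (f e)\<bar>"
    and cH: "\<forall>x. colH x = (if f (fst x) < g (fst x) then C (fst x) else opp (C (fst x)))"
  shows "\<forall>w. (\<Sum>x\<in>{x\<in>Sigma E (\<lambda>e. {..<m e}). w \<in> res_ends ends x}. sg (colH x)) = 0"
proof
  fix w
  have fin: "finite E" using mg by (simp add: multigraph_def)
  have S: "{x\<in>Sigma E (\<lambda>e. {..<m e}). w \<in> res_ends ends x} = Sigma {e\<in>E. w \<in> ends e} (\<lambda>e. {..<m e})"
    by (auto simp: res_ends_def)
  have "(\<Sum>x\<in>{x\<in>Sigma E (\<lambda>e. {..<m e}). w \<in> res_ends ends x}. sg (colH x)) =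
      (\<Sum>e\<in>{e\<in>E. w \<in> ends e}. \<Sum>k<m e. sg (colH (e, k)))"
    unfolding S using sum.Sigma[of "{e\<in>E. w \<in> ends e}" "\<lambda>e. {..<m e}" "\<lambda>e k. sg (colH (e,k))"] fin
    by (simp add: case_prod_beta')
  also have "\<dots> = (\<Sum>e\<in>{e\<in>E. w \<in> ends e}. real (g e) * sg (C e) - real (f e) * sg (C e))"
  proof (rule sum.cong[OF refl])
    fix e
    show "(\<Sum>k<m e. sg (colH (e, k))) = real (g e) * sg (C e) - real (f e) * sg (C e)"
    proof (cases "f e < g e")
      case True
      then have "m e = g e - f e" using m by (simp add: nat_diff_distrib)
      then show ?thesis using True cH by (simp add: of_nat_diff algebra_simps)
    next
      case False
      then have "m e = f e - g e" using m by (simp add: nat_diff_distrib)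
      then show ?thesis using False cH by (simp add: of_nat_diff algebra_simps sg_opp)
    qed
  qed
  also have "\<dots> = 0" using cone_bal[OF mg f, of w] cone_bal[OF mg g, of w]
    by (simp add: sum_subtractf)
  finally show "(\<Sum>x\<in>{x\<in>Sigma E (\<lambda>e. {..<m e}). w \<in> res_ends ends x}. sg (colH x)) = 0" .
qed

lemma map_CAT:
  assumes mg: "multigraph V E ends" and gfeas: "feasible E l u g"
    and m: "\<forall>e. m e = nat \<bar>int (g e) - int (f e)\<bar>"
    and cH: "\<forall>x. colH x = (if f (fst x) < g (fst x) then C (fst x) else opp (C (fst x)))"
    and cat: "is_CAT (Sigma E (\<lambda>e. {..<m e})) (res_ends ends) colH vs es"
    and nd: "\<forall>i j. i < j \<longrightarrow> j < length es \<longrightarrow> colH (es ! i) = colH (es ! j) \<longrightarrow> vs ! i \<noteq> vs ! j"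
    and p: "p < length es" "fst (es ! p) = e0"
  shows "has_CAT_through (res_edges E l u f) (res_ends ends) (res_color C) (e0, if f e0 < g e0 then 1 else 3)"
proof -
  define n where "n = length es"
  have SX: "set es \<subseteq> Sigma E (\<lambda>e. {..<m e})" using cat by (simp add: is_CAT_def)
  have esX: "\<forall>k<n. fst (es ! k) \<in> E \<and> snd (es ! k) < m (fst (es ! k))"
  proof (intro allI impI)
    fix k assume "k < n"
    then have "es ! k \<in> Sigma E (\<lambda>e. {..<m e})" using SX nth_mem n_def by blast
    then show "fst (es ! k) \<in> E \<and> snd (es ! k) < m (fst (es ! k))" by (cases "es ! k") auto
  qed
  have EN: "\<forall>k<n. ends (fst (es ! k)) = {vs ! k, vs ! (k+1)}"
    using cat unfolding is_CAT_def n_def by (simp add: res_ends_def)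
  have D: "distinct es" using cat by (simp add: is_CAT_def)
  have c2: "\<forall>e\<in>E. card (ends e) = 2" using mg by (simp add: multigraph_def)
  have three: "False" if h: "i < j" "j < k" "k < n" "fst (es ! i) = fst (es ! j)" "fst (es ! j) = fst (es ! k)" for i j k
  proof -
    have cc: "colH (es ! i) = colH (es ! j)" "colH (es ! j) = colH (es ! k)" "colH (es ! i) = colH (es ! k)"
      using h cH by (simp_all add: cH)
    have d: "vs ! i \<noteq> vs ! j" "vs ! j \<noteq> vs ! k" "vs ! i \<noteq> vs ! k"
      using nd h cc n_def by (meson less_trans)+
    let ?e = "fst (es ! i)"
    have "i < n" "j < n" using h by auto
    then have "vs ! i \<in> ends ?e" "vs ! j \<in> ends ?e" "vs ! k \<in> ends ?e"
      using EN[rule_format, of i] EN[rule_format, of j] EN[rule_format, of k] h by auto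
    then have sub: "{vs ! i, vs ! j, vs ! k} \<subseteq> ends ?e" by auto
    have "card {vs ! i, vs ! j, vs ! k} = 3" using d by simp
    moreover have "card (ends ?e) = 2" using c2 esX h by auto
    moreover have "finite (ends ?e)" using \<open>card (ends ?e) = 2\<close> card_ge_0_finite[of "ends ?e"] by simp
    ultimately show False using card_mono[OF _ sub] by simp
  qed
  have two: "2 \<le> m (fst (es ! j))" if h: "i < j" "j < n" "fst (es ! i) = fst (es ! j)" for i j
  proof -
    have "es ! i \<noteq> es ! j" using D h n_def by (simp add: nth_eq_iff_index_eq)
    then have "snd (es ! i) \<noteq> snd (es ! j)" using h by (simp add: prod_eq_iff)
    moreover have "snd (es ! i) < m (fst (es ! j))" "snd (es ! j) < m (fst (es ! j))"
      using esX h by (metis less_trans)+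
    ultimately show ?thesis by linarith
  qed
  define b where "b e = (if f e < g e then 1 else 3::nat)" for e
  define \<delta> where "\<delta> k = (if \<exists>i<k. fst (es ! i) = fst (es ! k) then 1 else 0::nat)" for k
  define \<phi> where "\<phi> k = (fst (es ! k), b (fst (es ! k)) + \<delta> k)" for k
  define es' where "es' = map \<phi> [0..<n]"
  have d01: "\<delta> k = 0 \<or> \<delta> k = 1" for k by (simp add: \<delta>_def)
  have d1: "\<delta> k = 1 \<longleftrightarrow> (\<exists>i<k. fst (es ! i) = fst (es ! k))" for k by (simp add: \<delta>_def)
  have col: "res_color C (\<phi> k) = colH (es ! k)" for k
  proof -
    have "snd (\<phi> k) \<in> {1,2} \<longleftrightarrow> f (fst (es ! k)) < g (fst (es ! k))"
      using d01[of k] unfolding \<phi>_def b_def by auto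
    then show ?thesis unfolding res_color_def cH[rule_format, of "es ! k"]
      by (simp add: \<phi>_def)
  qed
  have inj: "inj_on \<phi> {0..<n}"
  proof (rule inj_onI)
    fix k1 k2 assume k: "k1 \<in> {0..<n}" "k2 \<in> {0..<n}" "\<phi> k1 = \<phi> k2"
    show "k1 = k2"
    proof (rule ccontr)
      assume ne: "k1 \<noteq> k2"
      have PP: "fst (es ! k1) = fst (es ! k2) \<and> b (fst (es ! k1)) + \<delta> k1 = b (fst (es ! k2)) + \<delta> k2"
        using k(3)[unfolded \<phi>_def prod.inject] .
      then have sf: "fst (es ! k1) = fst (es ! k2)" by blast
      from PP have "b (fst (es ! k1)) + \<delta> k1 = b (fst (es ! k2)) + \<delta> k2" by blast
      from this[unfolded sf] have sd: "\<delta> k1 = \<delta> k2" by simp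
      show False
      proof (cases "k1 < k2")
        case True
        then have "\<exists>i<k2. fst (es ! i) = fst (es ! k2)" using sf by blast
        then have "\<delta> k2 = 1" using d1[of k2] by blast
        then have "\<delta> k1 = 1" using sd by simp
        then obtain i where "i < k1" "fst (es ! i) = fst (es ! k1)" using d1[of k1] by blast
        moreover have "k2 < n" using k by simp
        ultimately show False using three[of i k1 k2] True sf by argo
      next
        case False
        then have lt: "k2 < k1" using ne by simp
        then have "\<exists>i<k1. fst (es ! i) = fst (es ! k1)" using sf[symmetric] by blast
        then have "\<delta> k1 = 1" using d1[of k1] by blast
        then have "\<delta> k2 = 1" using sd by simp
        then obtain i where "i < k2" "fst (es ! i) = fst (es ! k2)" using d1[of k2] by blast
        moreover have "k1 < n" using k by simp
        ultimately show False using three[of i k2 k1] lt sf by argo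
      qed
    qed
  qed
  have mem: "\<phi> k \<in> res_edges E l u f" if k: "k < n" for k
  proof -
    let ?e = "fst (es ! k)"
    have eE: "?e \<in> E" and sm: "snd (es ! k) < m ?e" using esX k by auto
    have gu: "l ?e \<le> g ?e \<and> g ?e \<le> u ?e" using gfeas eE by (simp add: feasible_def)
    have m2: "2 \<le> m ?e" if dk: "\<delta> k = 1"
    proof -
      obtain i where "i < k" "fst (es ! i) = ?e" using d1[of k] dk by blast
      then show ?thesis using two[of i k] k by simp
    qed
    note d01 = d01[of k]
    show ?thesis
    proof (cases "f ?e < g ?e")
      case True
      then have "m ?e = g ?e - f ?e" using m by (simp add: nat_diff_distrib)
      then show ?thesis using True d01 m2 sm gu eE
        by (auto simp: \<phi>_def b_def res_edges_def)
    next
      case False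
      then have "m ?e = f ?e - g ?e" using m by (simp add: nat_diff_distrib)
      then show ?thesis using False d01 m2 sm gu eE
        by (auto simp: \<phi>_def b_def res_edges_def)
    qed
  qed
  have ne: "n > 0" using p n_def by linarith
  have Lv: "length vs = n + 1" using cat by (simp add: is_CAT_def n_def)
  have "is_CAT (res_edges E l u f) (res_ends ends) (res_color C) vs es'"
    unfolding is_CAT_def
  proof (intro conjI)
    show "es' \<noteq> []" using ne by (simp add: es'_def)
    show "length vs = length es' + 1" using Lv by (simp add: es'_def)
    show "hd vs = last vs" using cat by (simp add: is_CAT_def)
    show "distinct es'" using inj by (simp add: es'_def distinct_map)
    show "set es' \<subseteq> res_edges E l u f" using mem by (auto simp: es'_def)
    show "\<forall>j<length es'. res_ends ends (es' ! j) = {vs ! j, vs ! (j + 1)}"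
      using EN by (simp add: es'_def res_ends_def \<phi>_def)
    show "\<forall>j. j + 1 < length es' \<longrightarrow> res_color C (es' ! j) \<noteq> res_color C (es' ! (j + 1))"
      using cat by (simp add: es'_def col is_CAT_def n_def)
    have "last es' = \<phi> (n - 1)" "hd es' = \<phi> 0" using ne by (simp_all add: es'_def last_conv_nth hd_conv_nth)
    moreover have "last es = es ! (n - 1)" "hd es = es ! 0" using ne n_def by (simp_all add: last_conv_nth hd_conv_nth)
    ultimately show "res_color C (last es') \<noteq> res_color C (hd es')"
      using cat by (simp add: col is_CAT_def)
  qed
  moreover have "(e0, if f e0 < g e0 then 1 else 3) \<in> set es'"
  proof -
    define p0 where "p0 = (LEAST q. q < n \<and> fst (es ! q) = e0)"
    have P0: "p0 < n \<and> fst (es ! p0) = e0" unfolding p0_def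
      by (rule LeastI[of _ p]) (use p n_def in auto)
    have "\<delta> p0 = 0"
    proof (rule ccontr)
      assume "\<delta> p0 \<noteq> 0"
      then have "\<delta> p0 = 1" using d01[of p0] by simp
      then obtain i where "i < p0" "fst (es ! i) = e0" using P0 d1[of p0] by auto
      then show False using not_less_Least[of i "\<lambda>q. q < n \<and> fst (es ! q) = e0"] P0 unfolding p0_def by auto
    qed
    then have "\<phi> p0 = (e0, if f e0 < g e0 then 1 else 3)" using P0 by (simp add: \<phi>_def b_def)
    then show ?thesis using P0 by (force simp: es'_def)
  qed
  ultimately show ?thesis unfolding has_CAT_through_def by blast
qed

theorem theorem3p2:
  fixes V :: "'v set" and E :: "'e set" and ends :: "'e \<Rightarrow> 'v set"
    and C :: "'e \<Rightarrow> color" and l u f :: "'e \<Rightarrow> nat"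
  assumes "multigraph V E ends"
    and "\<forall>e\<in>E. l e \<le> u e"
    and "in_alt_cone_nat V E ends C f"
    and "\<not> feasible E l u f"
    and "\<exists>g. in_alt_cone_nat V E ends C g \<and> feasible E l u g"
  shows "\<forall>e\<in>E.
     (f e < l e \<longrightarrow> has_CAT_through (res_edges E l u f) (res_ends ends) (res_color C) (e, 1)) \<and>
     (f e > u e \<longrightarrow> has_CAT_through (res_edges E l u f) (res_ends ends) (res_color C) (e, 3))"
proof -
  note mg = assms(1)
  obtain g where g: "in_alt_cone_nat V E ends C g" "feasible E l u g" using assms(5) by blast
  define m where "m e = nat \<bar>int (g e) - int (f e)\<bar>" for e
  define colH :: "'e \<times> nat \<Rightarrow> color" where "colH x = (if f (fst x) < g (fst x) then C (fst x) else opp (C (fst x)))" for x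
  have mm: "\<forall>e. m e = nat \<bar>int (g e) - int (f e)\<bar>" by (simp add: m_def)
  have cH: "\<forall>x. colH x = (if f (fst x) < g (fst x) then C (fst x) else opp (C (fst x)))"
    by (simp add: colH_def)
  have finE: "finite E" using mg by (simp add: multigraph_def)
  have fin: "finite (Sigma E (\<lambda>e. {..<m e}))" using finE by auto
  have c2: "\<forall>x\<in>Sigma E (\<lambda>e. {..<m e}). card (res_ends ends x) = 2"
    using mg by (auto simp: multigraph_def res_ends_def)
  have bal: "\<forall>w. (\<Sum>x\<in>{x\<in>Sigma E (\<lambda>e. {..<m e}). w \<in> res_ends ends x}. sg (colH x)) = 0"
    using H_bal[OF mg assms(3) g(1) mm cH] .
  have key: "has_CAT_through (res_edges E l u f) (res_ends ends) (res_color C) (e, if f e < g e then 1 else 3)"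
    if e: "e \<in> E" "f e \<noteq> g e" for e
  proof -
    have "0 < m e" using e by (simp add: m_def)
    then have "(e, 0) \<in> Sigma E (\<lambda>e. {..<m e})" using e by simp
    from CAT_exists[OF fin c2 bal this] obtain vs es where
      "is_CAT (Sigma E (\<lambda>e. {..<m e})) (res_ends ends) colH vs es" "(e, 0) \<in> set es" by blast
    from CAT_minimal[OF this, of "\<lambda>x. fst x = e"] obtain vs' es' where
      c: "is_CAT (Sigma E (\<lambda>e. {..<m e})) (res_ends ends) colH vs' es'" "\<exists>x\<in>set es'. fst x = e"
      "\<forall>i j. i < j \<longrightarrow> j < length es' \<longrightarrow> colH (es' ! i) = colH (es' ! j) \<longrightarrow> vs' ! i \<noteq> vs' ! j"
      by auto
    then obtain p where p: "p < length es'" "fst (es' ! p) = e" by (auto simp: in_set_conv_nth)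
    show ?thesis using map_CAT[OF mg g(2) mm cH c(1) c(3) p] .
  qed
  show ?thesis
  proof (intro ballI conjI impI)
    fix e assume eE: "e \<in> E"
    have gb: "l e \<le> g e" "g e \<le> u e" using g(2) eE by (auto simp: feasible_def)
    { assume "f e < l e"
      then have "f e < g e" using gb by simp
      then show "has_CAT_through (res_edges E l u f) (res_ends ends) (res_color C) (e, 1)"
        using key[OF eE] by simp }
    { assume "u e < f e"
      then have "g e < f e" using gb by simp
      then show "has_CAT_through (res_edges E l u f) (res_ends ends) (res_color C) (e, 3)"
        using key[OF eE] by simp }
  qed
qed

end
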